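(* Let $n\ge 1$, $0\le r\le n$ and let $a$ be an integer with $a\ge 1$, and $a\ge 2$ if $r\ge 1$. Then (i) $\dim_{\mathbb K}\left(R_n/\mathcal{I}_{n,0}^{\langle a\rangle}\right)=(a-1)^{n-1}(a+n-1)$; (ii) $\dim_{\mathbb K}\left(R_n/\mathcal{I}_{n,r}^{\langle a\rangle}\right)=\sum_{i=0}^r(-1)^i\binom{r}{i}\theta_{n-i}(a-1)$, where $\theta_l(x)=x^{l-1}(x+l)$ for $l\ge 1$ and $\theta_0(x)=1$.
   Context: $\mathbb K$ is a field and $R_m=\mathbb K[x_1,\ldots,x_m]$. For integers $m\ge 1$, $0\le s\le m$ and $a\ge1$ (with $a\ge 2$ when $s\ge1$), define the weight $\omega(i)=a$ if $1\le i\le m-s$ and $\omega(i)=a-1$ if $m-s<i\le m$, and the monomial ideal $\mathcal{I}_{m,s}^{\langle a\rangle}=\langle x_i^{\omega(i)},\ x_i^{\omega(i)-1}x_j^{\omega(j)-1} : i,j\in[m],\ i\ne j\rangle\subseteq R_m$. Here $0^0=1$. *)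

theory Defs
  imports Main "HOL-Library.Poly_Mapping"
begin

text \<open>Polynomials over a field 'k in variables indexed by nat, represented as finitely
supported maps from exponent vectors exponent vectors to coefficients.
Variable x_i is indexed by i.\<close>

type_synonym 'k mpoly = "(nat \<Rightarrow>\<^sub>0 nat) \<Rightarrow>\<^sub>0 'k"

definition mon :: "(nat \<Rightarrow>\<^sub>0 nat) \<Rightarrow> 'k::field mpoly" where
  "mon e = Poly_Mapping.single e 1"

definition xpow :: "nat \<Rightarrow> nat \<Rightarrow> 'k::field mpoly" where
  "xpow i k = mon (Poly_Mapping.single i k)"

definition Rpoly :: "nat \<Rightarrow> 'k::field mpoly set" where
  "Rpoly m = {p. \<forall>e \<in> Poly_Mapping.keys p. Poly_Mapping.keys e \<subseteq> {1..m}}"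

definition ideal_gen :: "nat \<Rightarrow> 'k::field mpoly set \<Rightarrow> 'k mpoly set" where
  "ideal_gen m G = {(\<Sum>g\<in>F. q g * g) | F q. finite F \<and> F \<subseteq> G \<and> (\<forall>g\<in>F. q g \<in> Rpoly m)}"

definition smul :: "'k::field \<Rightarrow> 'k mpoly \<Rightarrow> 'k mpoly" where
  "smul c p = Poly_Mapping.single 0 c * p"

definition indep_mod :: "nat \<Rightarrow> 'k::field mpoly set \<Rightarrow> 'k mpoly set \<Rightarrow> bool" where
  "indep_mod m I S \<longleftrightarrow> finite S \<and> S \<subseteq> Rpoly m \<and>
     (\<forall>c. (\<Sum>s\<in>S. smul (c s) s) \<in> I \<longrightarrow> (\<forall>s\<in>S. c s = 0))"

text \<open>dim_K (R_m / I) = d: the quotient is finite-dimensional of dimension d, i.e. the maximal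
size of a family in R_m that is linearly independent modulo I is exactly d.\<close>
definition quot_dim_eq :: "nat \<Rightarrow> 'k::field mpoly set \<Rightarrow> nat \<Rightarrow> bool" where
  "quot_dim_eq m I d \<longleftrightarrow> (\<exists>S. indep_mod m I S \<and> card S = d) \<and>
     (\<forall>S. indep_mod m I S \<longrightarrow> card S \<le> d)"

definition omega :: "nat \<Rightarrow> nat \<Rightarrow> nat \<Rightarrow> nat \<Rightarrow> nat" where
  "omega m s a i = (if 1 \<le> i \<and> i \<le> m - s then a else a - 1)"

definition Iideal :: "nat \<Rightarrow> nat \<Rightarrow> nat \<Rightarrow> 'k::field mpoly set" where
  "Iideal m s a = ideal_gen m
     ({xpow i (omega m s a i) | i. i \<in> {1..m}} \<union>
      {xpow i (omega m s a i - 1) * xpow j (omega m s a j - 1) | i j.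
         i \<in> {1..m} \<and> j \<in> {1..m} \<and> i \<noteq> j})"

definition theta :: "nat \<Rightarrow> int \<Rightarrow> int" where
  "theta l x = (if l = 0 then 1 else x ^ (l - 1) * (x + int l))"

end

theory Submission
  imports Defs "HOL-Library.FuncSet"
begin


lemma expand: "(p::'a \<Rightarrow>\<^sub>0 'b::comm_monoid_add) = (\<Sum>k\<in>Poly_Mapping.keys p. Poly_Mapping.single k (Poly_Mapping.lookup p k))"
proof (rule poly_mapping_eqI)
  fix j
  have "Poly_Mapping.lookup (\<Sum>k\<in>Poly_Mapping.keys p. Poly_Mapping.single k (Poly_Mapping.lookup p k)) j = (\<Sum>k\<in>Poly_Mapping.keys p. (Poly_Mapping.lookup p k when k = j))"
    by (simp add: lookup_sum lookup_single)
  also have "\<dots> = (\<Sum>k\<in>Poly_Mapping.keys p. (if k = j then Poly_Mapping.lookup p j else 0))"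
    by (rule sum.cong) (auto simp: when_def)
  also have "\<dots> = Poly_Mapping.lookup p j" by (simp add: in_keys_iff)
  finally show "Poly_Mapping.lookup p j = Poly_Mapping.lookup (\<Sum>k\<in>Poly_Mapping.keys p. Poly_Mapping.single k (Poly_Mapping.lookup p k)) j" by simp
qed

lemma lookup_smul: "Poly_Mapping.lookup (smul c (p::'k::field mpoly)) k = c * Poly_Mapping.lookup p k"
proof -
  have "smul c p = (\<Sum>k\<in>Poly_Mapping.keys p. Poly_Mapping.single k (c * Poly_Mapping.lookup p k))"
    unfolding smul_def by (subst expand[of p]) (simp add: sum_distrib_left mult_single)
  hence "Poly_Mapping.lookup (smul c p) k = (\<Sum>j\<in>Poly_Mapping.keys p. (c * Poly_Mapping.lookup p j when j = k))"
    by (simp add: lookup_sum lookup_single)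
  also have "\<dots> = (\<Sum>j\<in>Poly_Mapping.keys p. (if j = k then c * Poly_Mapping.lookup p k else 0))"
    by (rule sum.cong) (auto simp: when_def)
  also have "\<dots> = c * Poly_Mapping.lookup p k" by (simp add: in_keys_iff)
  finally show ?thesis .
qed

lemma smul_mon: "smul c (mon e :: 'k::field mpoly) = Poly_Mapping.single e c"
  by (simp add: smul_def mon_def mult_single)

lemma keys_smul: "Poly_Mapping.keys (smul c (p::'k::field mpoly)) \<subseteq> Poly_Mapping.keys p"
  by (auto simp: in_keys_iff lookup_smul)

lemma dvd_exp: "(\<exists>d. (e::nat \<Rightarrow>\<^sub>0 nat) = d + g) \<longleftrightarrow> (\<forall>i. Poly_Mapping.lookup g i \<le> Poly_Mapping.lookup e i)"
proof
  assume "\<exists>d. e = d + g" then show "\<forall>i. Poly_Mapping.lookup g i \<le> Poly_Mapping.lookup e i" by (auto simp: lookup_add)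
next
  assume h: "\<forall>i. Poly_Mapping.lookup g i \<le> Poly_Mapping.lookup e i"
  have "e = (e - g) + g" by (rule poly_mapping_eqI) (use h in \<open>simp add: lookup_add lookup_minus\<close>)
  then show "\<exists>d. e = d + g" by blast
qed

lemma keys_add_nat: "Poly_Mapping.keys ((d::nat \<Rightarrow>\<^sub>0 nat) + g) = Poly_Mapping.keys d \<union> Poly_Mapping.keys g"
  unfolding set_eq_iff Un_iff in_keys_iff lookup_add by simp

lemma Rpoly_sum: "finite A \<Longrightarrow> (\<And>x. x \<in> A \<Longrightarrow> f x \<in> Rpoly m) \<Longrightarrow> sum f A \<in> Rpoly m"
  unfolding Rpoly_def
proof (intro CollectI ballI)
  fix e assume "e \<in> Poly_Mapping.keys (sum f A)" and H: "\<And>x. x \<in> A \<Longrightarrow> f x \<in> {p. \<forall>e\<in>Poly_Mapping.keys p. Poly_Mapping.keys e \<subseteq> {1..m}}"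
  have "e \<in> (\<Union>i \<in>A. Poly_Mapping.keys(f i))" using keys_sum[of f A] \<open>e \<in> _\<close> by (rule subsetD)
  then obtain x where "x \<in> A" "e \<in> Poly_Mapping.keys (f x)" by (rule UN_E)
  then show "Poly_Mapping.keys e \<subseteq> {1..m}" using H by blast
qed

lemma Rpoly_smul: "p \<in> Rpoly m \<Longrightarrow> smul c p \<in> Rpoly m"
  unfolding Rpoly_def
proof (intro CollectI ballI)
  fix e assume H: "p \<in> {p. \<forall>e\<in>Poly_Mapping.keys p. Poly_Mapping.keys e \<subseteq> {1..m}}" and "e \<in> Poly_Mapping.keys (smul c p)"
  then have "e \<in> Poly_Mapping.keys p" using keys_smul[of c p] by (rule_tac subsetD) 
  then show "Poly_Mapping.keys e \<subseteq> {1..m}" using H by simp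
qed

lemma ideal_keys:
  assumes "p \<in> ideal_gen m (mon ` E :: 'k::field mpoly set)" "k \<in> Poly_Mapping.keys p"
  shows "\<exists>g\<in>E. \<exists>d. k = d + g"
proof -
  obtain F q where p: "p = (\<Sum>g\<in>F. q g * g)" and F: "finite F" "F \<subseteq> mon ` E"
    using assms(1) unfolding ideal_gen_def by blast
  have "k \<in> (\<Union>h\<in>F. Poly_Mapping.keys (q h * h))" using keys_sum[of "\<lambda>h. q h * h" F] assms(2) p by (rule_tac subsetD) simp_all
  then obtain h where h: "h \<in> F" "k \<in> Poly_Mapping.keys (q h * h)" by (rule UN_E)
  from h F obtain g where g: "g \<in> E" "h = mon g" by blast
  have "k \<in> {a + b | a b. a \<in> Poly_Mapping.keys (q h) \<and> b \<in> Poly_Mapping.keys h}"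
    using keys_mult[of "q h" h] h(2) by (rule subsetD)
  then obtain a b where "k = a + b" "b \<in> Poly_Mapping.keys (mon g :: 'k mpoly)" using g(2) by blast
  then have "k = a + g" by (simp add: mon_def split: if_splits)
  with g show ?thesis by blast
qed

lemma ideal_in:
  assumes "p \<in> Rpoly m"
    and K: "\<And>k. k \<in> Poly_Mapping.keys p \<Longrightarrow> \<exists>g\<in>E. \<exists>d. k = d + g"
  shows "p \<in> ideal_gen m (mon ` E :: 'k::field mpoly set)"
proof -
  define gk where "gk k = (SOME g. g \<in> E \<and> (\<exists>d. k = d + g))" for k
  define dk where "dk k = (SOME d. k = d + gk k)" for k
  have gk: "gk k \<in> E" "k = dk k + gk k" if "k \<in> Poly_Mapping.keys p" for k
  proof -
    have "gk k \<in> E \<and> (\<exists>d. k = d + gk k)" unfolding gk_def by (rule someI_ex) (use K[OF that] in blast)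
    then show "gk k \<in> E" "k = dk k + gk k" unfolding dk_def by (auto intro: someI_ex)
  qed
  define F where "F = (\<lambda>k. mon (gk k) :: 'k mpoly) ` Poly_Mapping.keys p"
  define q where "q h = (\<Sum>k\<in>{k\<in>Poly_Mapping.keys p. mon (gk k) = h}. Poly_Mapping.single (dk k) (Poly_Mapping.lookup p k))" for h :: "'k mpoly"
  have "finite F" "F \<subseteq> mon ` E" using gk by (auto simp: F_def)
  moreover have "\<forall>h\<in>F. q h \<in> Rpoly m"
  proof
    fix h assume "h \<in> F"
    show "q h \<in> Rpoly m" unfolding q_def
    proof (rule Rpoly_sum)
      fix k assume k: "k \<in> {k\<in>Poly_Mapping.keys p. mon (gk k) = h}"
      have "Poly_Mapping.keys k \<subseteq> {1..m}" using assms(1) k unfolding Rpoly_def by simp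
      moreover have "Poly_Mapping.keys k = Poly_Mapping.keys (dk k) \<union> Poly_Mapping.keys (gk k)"
        using gk(2)[of k] k keys_add_nat[of "dk k" "gk k"] by simp
      ultimately have "Poly_Mapping.keys (dk k) \<subseteq> {1..m}" by blast
      then show "Poly_Mapping.single (dk k) (Poly_Mapping.lookup p k) \<in> Rpoly m" unfolding Rpoly_def by simp
    qed simp
  qed
  moreover have "p = (\<Sum>h\<in>F. q h * h)"
  proof -
    have "(\<Sum>h\<in>F. q h * h) = (\<Sum>h\<in>F. \<Sum>k\<in>{k\<in>Poly_Mapping.keys p. mon (gk k) = h}. Poly_Mapping.single (dk k) (Poly_Mapping.lookup p k) * mon (gk k))"
      unfolding q_def sum_distrib_right by (rule sum.cong) simp_all
    also have "\<dots> = (\<Sum>k\<in>Poly_Mapping.keys p. Poly_Mapping.single (dk k) (Poly_Mapping.lookup p k) * mon (gk k))"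
      unfolding F_def by (rule sum.image_gen[symmetric]) simp
    also have "\<dots> = (\<Sum>k\<in>Poly_Mapping.keys p. Poly_Mapping.single k (Poly_Mapping.lookup p k))"
      by (rule sum.cong) (use gk in \<open>simp_all add: mon_def mult_single\<close>)
    finally show ?thesis using expand[of p] by simp
  qed
  ultimately show ?thesis unfolding ideal_gen_def by blast
qed

lemma matrix_dep:
  fixes A :: "'t \<Rightarrow> 's \<Rightarrow> 'k::field"
  assumes "finite S" "finite T" "card T > card S"
  shows "\<exists>c. (\<exists>t\<in>T. c t \<noteq> 0) \<and> (\<forall>s\<in>S. (\<Sum>t\<in>T. c t * A t s) = 0)"
  using assms
proof (induction S arbitrary: T A rule: finite_induct)
  case empty
  then obtain t0 where "t0 \<in> T" by fastforce
  then show ?case by (rule_tac x="\<lambda>_. 1" in exI) auto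
next
  case (insert s0 S T A)
  show ?case
  proof (cases "\<forall>t\<in>T. A t s0 = 0")
    case True
    have "card T > card S" using insert by simp
    from insert.IH[OF insert.prems(1) this] obtain c where c: "\<exists>t\<in>T. c t \<noteq> 0" "\<forall>s\<in>S. (\<Sum>t\<in>T. c t * A t s) = 0" by blast
    then show ?thesis using True by (rule_tac x=c in exI) auto
  next
    case False
    then obtain t0 where t0: "t0 \<in> T" "A t0 s0 \<noteq> 0" by blast
    define T' where "T' = T - {t0}"
    define B where "B t s = A t s - (A t s0 / A t0 s0) * A t0 s" for t s
    have "finite T'" "card T' > card S" using insert t0 by (auto simp: T'_def)
    from insert.IH[OF this] obtain c where c: "\<exists>t\<in>T'. c t \<noteq> 0" "\<forall>s\<in>S. (\<Sum>t\<in>T'. c t * B t s) = 0" by blast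
    define c' where "c' t = (if t = t0 then - (\<Sum>t\<in>T'. c t * A t s0) / A t0 s0 else c t)" for t
    have key: "(\<Sum>t\<in>T. c' t * A t s) = (\<Sum>t\<in>T'. c t * B t s)" for s
    proof -
      have "(\<Sum>t\<in>T. c' t * A t s) = c' t0 * A t0 s + (\<Sum>t\<in>T'. c' t * A t s)"
        unfolding T'_def using t0 insert.prems(1) by (simp add: sum.remove)
      also have "(\<Sum>t\<in>T'. c' t * A t s) = (\<Sum>t\<in>T'. c t * A t s)"
        by (rule sum.cong) (auto simp: c'_def T'_def)
      also have "c' t0 * A t0 s = - (\<Sum>t\<in>T'. c t * (A t s0 / A t0 s0) * A t0 s)"
        by (simp add: c'_def sum_distrib_right sum_negf[symmetric] sum_divide_distrib)
      finally show ?thesis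
        by (simp add: B_def right_diff_distrib sum_subtractf algebra_simps)
    qed
    show ?thesis
    proof (rule exI[of _ c'], intro conjI ballI)
      show "\<exists>t\<in>T. c' t \<noteq> 0" using c(1) by (auto simp: c'_def T'_def)
    next
      fix s assume "s \<in> insert s0 S"
      then show "(\<Sum>t\<in>T. c' t * A t s) = 0"
      proof
        assume "s = s0" then show ?thesis using t0(2) by (simp add: key B_def)
      next
        assume "s \<in> S" then show ?thesis using c(2) by (simp add: key)
      qed
    qed
  qed
qed

lemma mon_inj: "inj (mon :: (nat \<Rightarrow>\<^sub>0 nat) \<Rightarrow> 'k::field mpoly)"
proof (rule injI)
  fix x y assume "(mon x :: 'k mpoly) = mon y"
  then have "Poly_Mapping.lookup (mon x :: 'k mpoly) x = Poly_Mapping.lookup (mon y :: 'k mpoly) x" by simp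
  then show "x = y" by (auto simp: mon_def lookup_single when_def split: if_splits)
qed

lemma dim_general:
  assumes finN: "finite N"
    and N1: "\<And>e. e \<in> N \<Longrightarrow> Poly_Mapping.keys e \<subseteq> {1..m}"
    and N2: "\<And>e. Poly_Mapping.keys e \<subseteq> {1..m} \<Longrightarrow> e \<in> N \<longleftrightarrow> \<not> (\<exists>g\<in>E. \<exists>d. e = d + g)"
  shows "quot_dim_eq m (ideal_gen m (mon ` E) :: 'k::field mpoly set) (card N)"
  unfolding quot_dim_eq_def
proof (intro conjI allI impI)
  let ?I = "ideal_gen m (mon ` E) :: 'k::field mpoly set"
  have "indep_mod m ?I (mon ` N)"
    unfolding indep_mod_def
  proof (intro conjI allI impI ballI)
    show "finite (mon ` N :: 'k mpoly set)" using finN by simp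
    show "(mon ` N :: 'k mpoly set) \<subseteq> Rpoly m" using N1 unfolding Rpoly_def mon_def by (auto dest!: N1 simp del: atLeastAtMost_iff)
  next
    fix c and s :: "'k mpoly" assume H: "(\<Sum>s\<in>(mon ` N :: 'k mpoly set). smul (c s) s) \<in> ?I" and s: "s \<in> mon ` N"
    then obtain e where e: "e \<in> N" "s = mon e" by blast
    have eq: "(\<Sum>s\<in>(mon ` N :: 'k mpoly set). smul (c s) s) = (\<Sum>e\<in>N. Poly_Mapping.single e (c (mon e :: 'k mpoly)))"
      proof -
      have "inj_on (mon :: _ \<Rightarrow> 'k mpoly) N" using mon_inj by (metis inj_on_subset subset_UNIV)
      then show ?thesis by (simp add: sum.reindex smul_mon)
    qed
    have "Poly_Mapping.lookup (\<Sum>e\<in>N. Poly_Mapping.single e (c (mon e :: 'k mpoly))) e = (\<Sum>e'\<in>N. (if e' = e then c (mon e :: 'k mpoly) else 0))"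
      unfolding lookup_sum lookup_single by (rule sum.cong) (auto simp: when_def)
    also have "\<dots> = c (mon e :: 'k mpoly)" using e finN by simp
    finally have lk: "Poly_Mapping.lookup (\<Sum>e\<in>N. Poly_Mapping.single e (c (mon e :: 'k mpoly))) e = c s" using e by simp
    show "c s = 0"
    proof (rule ccontr)
      assume "c s \<noteq> 0"
      then have "e \<in> Poly_Mapping.keys (\<Sum>e\<in>N. Poly_Mapping.single e (c (mon e :: 'k mpoly)))" using lk by (simp add: in_keys_iff)
      moreover have "(\<Sum>e\<in>N. Poly_Mapping.single e (c (mon e :: 'k mpoly))) \<in> ?I" using H eq by simp
      ultimately have "\<exists>g\<in>E. \<exists>d. e = d + g" by (intro ideal_keys[of _ m])
      then show False using N2[OF N1[OF e(1)]] e(1) by blast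
    qed
  qed
  moreover have "card (mon ` N :: 'k mpoly set) = card N" using mon_inj by (metis card_image inj_on_subset subset_UNIV)
  ultimately show "\<exists>S. indep_mod m ?I S \<and> card S = card N" by blast
next
  fix T :: "'k mpoly set"
  assume T: "indep_mod m (ideal_gen m (mon ` E)) T"
  show "card T \<le> card N"
  proof (rule ccontr)
    assume "\<not> card T \<le> card N"
    then have "card T > card N" by simp
    from matrix_dep[OF finN _ this, of "\<lambda>t e. Poly_Mapping.lookup t e"] T obtain c where
      c: "\<exists>t\<in>T. c t \<noteq> 0" "\<forall>e\<in>N. (\<Sum>t\<in>T. c t * Poly_Mapping.lookup t e) = 0"
      unfolding indep_mod_def by blast
    let ?q = "\<Sum>t\<in>T. smul (c t) t"
    have TR: "finite T" "T \<subseteq> Rpoly m" using T unfolding indep_mod_def by auto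
    have qR: "?q \<in> Rpoly m" using TR by (intro Rpoly_sum Rpoly_smul) auto
    have lq: "Poly_Mapping.lookup ?q k = (\<Sum>t\<in>T. c t * Poly_Mapping.lookup t k)" for k
      by (simp add: lookup_sum lookup_smul)
    have "?q \<in> ideal_gen m (mon ` E)"
    proof (rule ideal_in[OF qR])
      fix k assume k: "k \<in> Poly_Mapping.keys ?q"
      then have kk: "Poly_Mapping.keys k \<subseteq> {1..m}" using qR unfolding Rpoly_def by simp
      have "k \<notin> N" using k c(2) lq by (auto simp: in_keys_iff)
      then show "\<exists>g\<in>E. \<exists>d. k = d + g" using N2[OF kk] by blast
    qed
    then have "\<forall>t\<in>T. c t = 0" using T unfolding indep_mod_def by blast
    then show False using c(1) by blast
  qed
qed

definition PB :: "nat set \<Rightarrow> (nat \<Rightarrow> nat set) \<Rightarrow> (nat \<Rightarrow>\<^sub>0 nat) set" where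
  "PB D X = {e. Poly_Mapping.keys e \<subseteq> D \<and> (\<forall>i\<in>D. Poly_Mapping.lookup e i \<in> X i)}"

lemma PB_bij:
  assumes "finite D"
  shows "bij_betw (\<lambda>e. restrict (Poly_Mapping.lookup e) D) (PB D X) (PiE D X)"
  unfolding bij_betw_def
proof (intro conjI)
  show "inj_on (\<lambda>e. restrict (Poly_Mapping.lookup e) D) (PB D X)"
  proof (rule inj_onI)
    fix e e' assume e: "e \<in> PB D X" "e' \<in> PB D X" and eq: "restrict (Poly_Mapping.lookup e) D = restrict (Poly_Mapping.lookup e') D"
    show "e = e'"
    proof (rule poly_mapping_eqI)
      fix k show "Poly_Mapping.lookup e k = Poly_Mapping.lookup e' k"
      proof (cases "k \<in> D")
        case True then show ?thesis using fun_cong[OF eq, of k] by simp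
      next
        case False
        then have "k \<notin> Poly_Mapping.keys e" "k \<notin> Poly_Mapping.keys e'" using e unfolding PB_def by auto
        then show ?thesis by (simp add: in_keys_iff)
      qed
    qed
  qed
  show "(\<lambda>e. restrict (Poly_Mapping.lookup e) D) ` PB D X = PiE D X"
  proof
    show "(\<lambda>e. restrict (Poly_Mapping.lookup e) D) ` PB D X \<subseteq> PiE D X"
      unfolding PB_def by auto
    show "PiE D X \<subseteq> (\<lambda>e. restrict (Poly_Mapping.lookup e) D) ` PB D X"
    proof
      fix f assume f: "f \<in> PiE D X"
      define g where "g i = (if i \<in> D then f i else 0)" for i
      have fin: "finite {i. g i \<noteq> 0}" using assms by (rule finite_subset[rotated]) (auto simp: g_def)
      define e where "e = Abs_poly_mapping g"
      have le: "Poly_Mapping.lookup e = g" unfolding e_def using fin by simp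
      have "e \<in> PB D X" unfolding PB_def using f by (auto simp: in_keys_iff le g_def split: if_splits)
      moreover have "restrict (Poly_Mapping.lookup e) D = f" using f by (auto simp: le g_def PiE_def extensional_def)
      ultimately show "f \<in> (\<lambda>e. restrict (Poly_Mapping.lookup e) D) ` PB D X" by force
    qed
  qed
qed

lemma PB_card: "finite D \<Longrightarrow> card (PB D X) = (\<Prod>i\<in>D. card (X i))"
  using PB_bij[of D X] by (simp add: bij_betw_same_card card_PiE)

lemma PB_finite: "finite D \<Longrightarrow> (\<And>i. i \<in> D \<Longrightarrow> finite (X i)) \<Longrightarrow> finite (PB D X)"
  using PB_bij[of D X] bij_betw_finite finite_PiE by blast



definition NS :: "(nat \<Rightarrow> nat) \<Rightarrow> nat \<Rightarrow> (nat \<Rightarrow>\<^sub>0 nat) set" where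
  "NS w m = {e. Poly_Mapping.keys e \<subseteq> {1..m} \<and> (\<forall>i\<in>{1..m}. Poly_Mapping.lookup e i < w i) \<and>
     (\<forall>i\<in>{1..m}. \<forall>j\<in>{1..m}. i \<noteq> j \<longrightarrow> \<not> (w i - 1 \<le> Poly_Mapping.lookup e i \<and> w j - 1 \<le> Poly_Mapping.lookup e j))}"

definition GE :: "(nat \<Rightarrow> nat) \<Rightarrow> nat \<Rightarrow> (nat \<Rightarrow>\<^sub>0 nat) set" where
  "GE w m = {Poly_Mapping.single i (w i) | i. i \<in> {1..m}} \<union>
     {Poly_Mapping.single i (w i - 1) + Poly_Mapping.single j (w j - 1) | i j. i \<in> {1..m} \<and> j \<in> {1..m} \<and> i \<noteq> j}"

lemma dvd_single: "(\<exists>d. (e::nat \<Rightarrow>\<^sub>0 nat) = d + Poly_Mapping.single i a) \<longleftrightarrow> a \<le> Poly_Mapping.lookup e i"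
  unfolding dvd_exp by (auto simp: lookup_single when_def)

lemma dvd_single2: "i \<noteq> j \<Longrightarrow> (\<exists>d. (e::nat \<Rightarrow>\<^sub>0 nat) = d + (Poly_Mapping.single i a + Poly_Mapping.single j b)) \<longleftrightarrow> a \<le> Poly_Mapping.lookup e i \<and> b \<le> Poly_Mapping.lookup e j"
  unfolding dvd_exp by (auto simp: lookup_single lookup_add when_def)

lemma NS_char:
  assumes "Poly_Mapping.keys e \<subseteq> {1..m}"
  shows "e \<in> NS w m \<longleftrightarrow> \<not> (\<exists>g\<in>GE w m. \<exists>d. e = d + g)"
proof -
  have "(\<exists>g\<in>GE w m. \<exists>d. e = d + g) \<longleftrightarrow> (\<exists>i\<in>{1..m}. w i \<le> Poly_Mapping.lookup e i) \<or>
     (\<exists>i\<in>{1..m}. \<exists>j\<in>{1..m}. i \<noteq> j \<and> w i - 1 \<le> Poly_Mapping.lookup e i \<and> w j - 1 \<le> Poly_Mapping.lookup e j)"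
  proof
    assume "\<exists>g\<in>GE w m. \<exists>d. e = d + g"
    then obtain g d where g: "g \<in> GE w m" and d: "e = d + g" by blast
    from g consider (a) i where "i \<in> {1..m}" "g = Poly_Mapping.single i (w i)"
      | (b) i j where "i \<in> {1..m}" "j \<in> {1..m}" "i \<noteq> j" "g = Poly_Mapping.single i (w i - 1) + Poly_Mapping.single j (w j - 1)"
      unfolding GE_def by blast
    then show "(\<exists>i\<in>{1..m}. w i \<le> Poly_Mapping.lookup e i) \<or>
     (\<exists>i\<in>{1..m}. \<exists>j\<in>{1..m}. i \<noteq> j \<and> w i - 1 \<le> Poly_Mapping.lookup e i \<and> w j - 1 \<le> Poly_Mapping.lookup e j)"
    proof cases
      case a then show ?thesis using d dvd_single[of e i "w i"] by blast
    next
      case b then show ?thesis using d dvd_single2[of i j e "w i - 1" "w j - 1"] by blast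
    qed
  next
    assume "(\<exists>i\<in>{1..m}. w i \<le> Poly_Mapping.lookup e i) \<or>
     (\<exists>i\<in>{1..m}. \<exists>j\<in>{1..m}. i \<noteq> j \<and> w i - 1 \<le> Poly_Mapping.lookup e i \<and> w j - 1 \<le> Poly_Mapping.lookup e j)"
    then show "\<exists>g\<in>GE w m. \<exists>d. e = d + g"
    proof
      assume "\<exists>i\<in>{1..m}. w i \<le> Poly_Mapping.lookup e i"
      then obtain i where i: "i \<in> {1..m}" "w i \<le> Poly_Mapping.lookup e i" by blast
      have "Poly_Mapping.single i (w i) \<in> GE w m" using i(1) unfolding GE_def by blast
      then show ?thesis using dvd_single[of e i "w i"] i(2) by blast
    next
      assume "\<exists>i\<in>{1..m}. \<exists>j\<in>{1..m}. i \<noteq> j \<and> w i - 1 \<le> Poly_Mapping.lookup e i \<and> w j - 1 \<le> Poly_Mapping.lookup e j"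
      then obtain i j where ij: "i \<in> {1..m}" "j \<in> {1..m}" "i \<noteq> j" "w i - 1 \<le> Poly_Mapping.lookup e i" "w j - 1 \<le> Poly_Mapping.lookup e j" by blast
      have "Poly_Mapping.single i (w i - 1) + Poly_Mapping.single j (w j - 1) \<in> GE w m" using ij(1-3) unfolding GE_def by blast
      then show ?thesis using dvd_single2[of i j e "w i - 1" "w j - 1"] ij by blast
    qed
  qed
  moreover have "e \<in> NS w m \<longleftrightarrow> \<not> ((\<exists>i\<in>{1..m}. w i \<le> Poly_Mapping.lookup e i) \<or>
     (\<exists>i\<in>{1..m}. \<exists>j\<in>{1..m}. i \<noteq> j \<and> w i - 1 \<le> Poly_Mapping.lookup e i \<and> w j - 1 \<le> Poly_Mapping.lookup e j))"
    using assms unfolding NS_def by (simp only: mem_Collect_eq not_le[symmetric]) blast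
  ultimately show ?thesis by simp
qed

lemma NS_decomp:
  assumes "\<forall>i\<in>{1..m}. w i \<ge> 1"
  shows "NS w m = PB {1..m} (\<lambda>j. {..<w j - 1}) \<union>
     (\<Union>i\<in>{1..m}. PB {1..m} (\<lambda>j. if j = i then {w i - 1} else {..<w j - 1}))" (is "_ = ?A \<union> ?B")
proof
  show "NS w m \<subseteq> ?A \<union> ?B"
  proof
    fix e assume e: "e \<in> NS w m"
    show "e \<in> ?A \<union> ?B"
    proof (cases "\<exists>i\<in>{1..m}. w i - 1 \<le> Poly_Mapping.lookup e i")
      case True
      then obtain i where i: "i \<in> {1..m}" "w i - 1 \<le> Poly_Mapping.lookup e i" by blast
      have "e \<in> PB {1..m} (\<lambda>j. if j = i then {w i - 1} else {..<w j - 1})"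
        unfolding PB_def
      proof (intro CollectI conjI ballI)
        show "Poly_Mapping.keys e \<subseteq> {1..m}" using e unfolding NS_def by blast
      next
        fix j assume j: "j \<in> {1..m}"
        have lt: "Poly_Mapping.lookup e j < w j" using e j unfolding NS_def by blast
        show "Poly_Mapping.lookup e j \<in> (if j = i then {w i - 1} else {..<w j - 1})"
        proof (cases "j = i")
          case True then show ?thesis using lt i by auto
        next
          case False
          then have "\<not> (w i - 1 \<le> Poly_Mapping.lookup e i \<and> w j - 1 \<le> Poly_Mapping.lookup e j)"
            using e i j unfolding NS_def by blast
          then show ?thesis using False i by auto
        qed
      qed
      then show ?thesis using i by blast
    next
      case False
      then have "e \<in> ?A" using e unfolding NS_def PB_def by (auto simp: not_le)
      then show ?thesis by blast
    qed
  qed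
next
  show "?A \<union> ?B \<subseteq> NS w m"
  proof
    fix e assume "e \<in> ?A \<union> ?B"
    then show "e \<in> NS w m"
    proof
      assume "e \<in> ?A"
      then show ?thesis using assms unfolding PB_def NS_def by fastforce
    next
      assume "e \<in> ?B"
      then obtain i where i: "i \<in> {1..m}" and e: "e \<in> PB {1..m} (\<lambda>j. if j = i then {w i - 1} else {..<w j - 1})" by blast
      have lk: "\<And>j. j \<in> {1..m} \<Longrightarrow> Poly_Mapping.lookup e j \<in> (if j = i then {w i - 1} else {..<w j - 1})"
        using e unfolding PB_def by blast
      show ?thesis unfolding NS_def
      proof (intro CollectI conjI ballI impI)
        show "Poly_Mapping.keys e \<subseteq> {1..m}" using e unfolding PB_def by blast
      next
        fix j assume j: "j \<in> {1..m}"
        then have "w j \<ge> 1" using assms by blast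
        then show "Poly_Mapping.lookup e j < w j" using lk[OF j] by (auto split: if_splits)
      next
        fix j k assume j: "j \<in> {1..m}" and k: "k \<in> {1..m}" and jk: "j \<noteq> k"
        show "\<not> (w j - 1 \<le> Poly_Mapping.lookup e j \<and> w k - 1 \<le> Poly_Mapping.lookup e k)"
          using lk[OF j] lk[OF k] jk by (auto split: if_splits)
      qed
    qed
  qed
qed

lemma NS_card:
  assumes "\<forall>i\<in>{1..m}. w i \<ge> 1"
  shows "finite (NS w m) \<and> card (NS w m) = (\<Prod>j\<in>{1..m}. w j - 1) + (\<Sum>i\<in>{1..m}. \<Prod>j\<in>{1..m}-{i}. w j - 1)"
proof -
  let ?A = "PB {1..m} (\<lambda>j. {..<w j - 1})"
  let ?B = "\<lambda>i. PB {1..m} (\<lambda>j. if j = i then {w i - 1} else {..<w j - 1})"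
  have fA: "finite ?A" by (rule PB_finite) auto
  have fB: "finite (?B i)" for i by (rule PB_finite) auto
  have fUB: "finite (\<Union>i\<in>{1..m}. ?B i)" using fB by blast
  have cA: "card ?A = (\<Prod>j\<in>{1..m}. w j - 1)" by (simp add: PB_card)
  have cB: "card (?B i) = (\<Prod>j\<in>{1..m}-{i}. w j - 1)" if i: "i \<in> {1..m}" for i
  proof -
    have "card (?B i) = (\<Prod>j\<in>{1..m}. card (if j = i then {w i - 1} else {..<w j - 1}))" by (simp add: PB_card)
    also have "\<dots> = (\<Prod>j\<in>{1..m}. if j = i then 1 else w j - 1)" by (rule prod.cong) auto
    also have "\<dots> = (\<Prod>j\<in>{1..m}-{i}. w j - 1)"
    proof -
      have "(\<Prod>j\<in>{1..m}. if j = i then 1 else w j - 1) = (if i = i then 1 else w i - 1) * (\<Prod>j\<in>{1..m}-{i}. if j = i then 1 else w j - 1)"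
        by (rule prod.remove) (use i in auto)
      also have "(\<Prod>j\<in>{1..m}-{i}. if j = i then 1 else w j - 1) = (\<Prod>j\<in>{1..m}-{i}. w j - 1)"
        by (rule prod.cong) auto
      finally show ?thesis by simp
    qed
    finally show ?thesis .
  qed
  have disjB: "?B i \<inter> ?B i' = {}" if "i \<in> {1..m}" "i' \<in> {1..m}" "i \<noteq> i'" for i i'
  proof (rule equals0I)
    fix e assume "e \<in> ?B i \<inter> ?B i'"
    then have "Poly_Mapping.lookup e i \<in> {w i - 1}" "Poly_Mapping.lookup e i \<in> {..<w i - 1}"
      using that unfolding PB_def by (auto dest!: bspec[of _ _ i])
    then show False by simp
  qed
  have cUB: "card (\<Union>i\<in>{1..m}. ?B i) = (\<Sum>i\<in>{1..m}. \<Prod>j\<in>{1..m}-{i}. w j - 1)"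
    by (subst card_UN_disjoint) (use fB disjB cB in auto)
  have disjAB: "?A \<inter> (\<Union>i\<in>{1..m}. ?B i) = {}"
  proof (rule equals0I)
    fix e assume "e \<in> ?A \<inter> (\<Union>i\<in>{1..m}. ?B i)"
    then obtain i where i: "i \<in> {1..m}" "e \<in> ?A" "e \<in> ?B i" by blast
    then have "Poly_Mapping.lookup e i \<in> {..<w i - 1}" "Poly_Mapping.lookup e i \<in> {w i - 1}"
      unfolding PB_def by (auto dest!: bspec[of _ _ i])
    then show False by simp
  qed
  show ?thesis
    unfolding NS_decomp[OF assms] using fA fUB disjAB cA cUB by (simp add: card_Un_disjoint)
qed

lemma mon_mult: "(mon a * mon b :: 'a::field mpoly) = mon (a + b)"
  by (simp add: mon_def mult_single)

lemma Iideal_eq: "(Iideal m s a :: 'k::field mpoly set) = ideal_gen m (mon ` GE (omega m s a) m)"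
proof -
  have "({xpow i (omega m s a i) | i. i \<in> {1..m}} \<union>
      {xpow i (omega m s a i - 1) * xpow j (omega m s a j - 1) | i j.
         i \<in> {1..m} \<and> j \<in> {1..m} \<and> i \<noteq> j} :: 'k mpoly set) = mon ` GE (omega m s a) m"
    unfolding GE_def xpow_def mon_mult by blast
  then show ?thesis unfolding Iideal_def by simp
qed

lemma prod_omega:
  assumes "finite T"
  shows "(\<Prod>j\<in>T. omega n s a j - 1) = (a - 1) ^ card (T \<inter> {1..n-s}) * (a - 2) ^ card (T - {1..n-s})"
proof -
  have "(\<Prod>j\<in>T. omega n s a j - 1) = (\<Prod>j\<in>T \<inter> {1..n-s}. omega n s a j - 1) * (\<Prod>j\<in>T - {1..n-s}. omega n s a j - 1)"
    by (rule prod.Int_Diff[OF assms])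
  also have "(\<Prod>j\<in>T \<inter> {1..n-s}. omega n s a j - 1) = (\<Prod>j\<in>T \<inter> {1..n-s}. a - 1)"
    by (rule prod.cong) (auto simp: omega_def)
  also have "(\<Prod>j\<in>T - {1..n-s}. omega n s a j - 1) = (\<Prod>j\<in>T - {1..n-s}. a - 2)"
    by (rule prod.cong) (auto simp: omega_def)
  finally show ?thesis by simp
qed

lemma count_omega:
  assumes "s \<le> n"
  shows "(\<Prod>j\<in>{1..n}. omega n s a j - 1) + (\<Sum>i\<in>{1..n}. \<Prod>j\<in>{1..n}-{i}. omega n s a j - 1)
    = (a-1)^(n-s)*(a-2)^s + (n-s)*((a-1)^(n-s-1)*(a-2)^s) + s*((a-1)^(n-s)*(a-2)^(s-1))"
proof -
  have D1: "{1..n} \<inter> {1..n-s} = {1..n-s}" by auto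
  have cD2: "card ({1..n} - {1..n-s}) = s"
  proof -
    have "{1..n} - {1..n-s} = {n-s+1..n}" by auto
    then show ?thesis using assms by simp
  qed
  have P: "(\<Prod>j\<in>{1..n}. omega n s a j - 1) = (a-1)^(n-s)*(a-2)^s"
    using prod_omega[of "{1..n}" n s a] unfolding D1 cD2 by simp
  have S1: "(\<Prod>j\<in>{1..n}-{i}. omega n s a j - 1) = (a-1)^(n-s-1)*(a-2)^s" if i: "i \<in> {1..n} \<inter> {1..n-s}" for i
  proof -
    have e1: "({1..n}-{i}) \<inter> {1..n-s} = {1..n-s} - {i}" by auto
    have e2: "({1..n}-{i}) - {1..n-s} = {1..n} - {1..n-s}" using i by auto
    have "card ({1..n-s} - {i}) = n - s - 1" using i by simp
    then show ?thesis using prod_omega[of "{1..n}-{i}" n s a] unfolding e1 e2 cD2 by simp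
  qed
  have S2: "(\<Prod>j\<in>{1..n}-{i}. omega n s a j - 1) = (a-1)^(n-s)*(a-2)^(s-1)" if i: "i \<in> {1..n} - {1..n-s}" for i
  proof -
    have e1: "({1..n}-{i}) \<inter> {1..n-s} = {1..n-s}" using i by auto
    have e2: "({1..n}-{i}) - {1..n-s} = ({1..n} - {1..n-s}) - {i}" by auto
    have "card (({1..n} - {1..n-s}) - {i}) = s - 1" using i cD2 by simp
    then show ?thesis using prod_omega[of "{1..n}-{i}" n s a] unfolding e1 e2 by simp
  qed
  have "(\<Sum>i\<in>{1..n}. \<Prod>j\<in>{1..n}-{i}. omega n s a j - 1) =
      (\<Sum>i\<in>{1..n} \<inter> {1..n-s}. \<Prod>j\<in>{1..n}-{i}. omega n s a j - 1) + (\<Sum>i\<in>{1..n} - {1..n-s}. \<Prod>j\<in>{1..n}-{i}. omega n s a j - 1)"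
    by (rule sum.Int_Diff) simp
  also have "\<dots> = (\<Sum>i\<in>{1..n} \<inter> {1..n-s}. (a-1)^(n-s-1)*(a-2)^s) + (\<Sum>i\<in>{1..n} - {1..n-s}. (a-1)^(n-s)*(a-2)^(s-1))"
    using S1 S2 by (intro arg_cong2[where f="(+)"] sum.cong) auto
  also have "\<dots> = (n-s)*((a-1)^(n-s-1)*(a-2)^s) + s*((a-1)^(n-s)*(a-2)^(s-1))"
    unfolding sum_constant D1 cD2 by simp
  finally show ?thesis using P by simp
qed

lemma Bin:
  fixes x :: int
  assumes "r \<le> n"
  shows "(\<Sum>i=0..r. (-1)^i * int (r choose i) * x^(n-i)) = x^(n-r) * (x-1)^r"
proof -
  have "(x-1)^r = (-1 + x)^r" by simp
  also have "\<dots> = (\<Sum>k\<le>r. of_nat (r choose k) * (-1)^k * x^(r-k))" by (rule binomial_ring)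
  finally have "x^(n-r) * (x-1)^r = (\<Sum>k\<le>r. of_nat (r choose k) * (-1)^k * (x^(n-r) * x^(r-k)))"
    by (simp add: sum_distrib_left algebra_simps)
  also have "\<dots> = (\<Sum>k\<le>r. (-1)^k * int (r choose k) * x^(n-k))"
  proof (rule sum.cong)
    fix k assume "k \<in> {..r}"
    then have "n - r + (r - k) = n - k" using assms by simp
    then show "of_nat (r choose k) * (-1)^k * (x^(n-r) * x^(r-k)) = (-1)^k * int (r choose k) * x^(n-k)"
      by (simp add: power_add[symmetric])
  qed simp
  finally show ?thesis by (simp add: atLeast0AtMost)
qed

lemma Der:
  fixes x :: int
  assumes "r \<le> n"
  shows "(\<Sum>i=0..r. (-1)^i * int (r choose i) * (int (n-i) * x^(n-i-1)))
     = int (n-r) * (x^(n-r-1) * (x-1)^r) + int r * (x^(n-r) * (x-1)^(r-1))"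
proof -
  have split: "(\<Sum>i=0..r. (-1)^i * int (r choose i) * (int (n-i) * x^(n-i-1)))
     = int (n-r) * (\<Sum>i=0..r. (-1)^i * int (r choose i) * x^(n-1-i))
       + (\<Sum>i=0..r. (-1)^i * int ((r - i) * (r choose i)) * x^(n-1-i))"
    unfolding sum_distrib_left sum.distrib[symmetric]
  proof (rule sum.cong)
    fix i assume "i \<in> {0..r}"
    then have e1: "int (n - i) = int (n-r) + int (r-i)" and e2: "n - i - 1 = n - 1 - i" using assms by auto
    show "(-1)^i * int (r choose i) * (int (n-i) * x^(n-i-1)) =
      int (n-r) * ((-1)^i * int (r choose i) * x^(n-1-i)) + (-1)^i * int ((r - i) * (r choose i)) * x^(n-1-i)"
      unfolding e1 e2 of_nat_mult by (simp only: algebra_simps)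
  qed simp
  have p1: "int (n-r) * (\<Sum>i=0..r. (-1)^i * int (r choose i) * x^(n-1-i)) = int (n-r) * (x^(n-r-1) * (x-1)^r)"
  proof (cases "n = r")
    case False
    then have "r \<le> n - 1" using assms by simp
    from Bin[OF this, of x] show ?thesis by (simp add: diff_commute)
  qed simp
  have p2: "(\<Sum>i=0..r. (-1)^i * int ((r - i) * (r choose i)) * x^(n-1-i)) = int r * (x^(n-r) * (x-1)^(r-1))"
  proof (cases r)
    case 0 then show ?thesis by simp
  next
    case (Suc r')
    have "(\<Sum>i=0..r. (-1)^i * int ((r - i) * (r choose i)) * x^(n-1-i)) = int r * (\<Sum>i=0..r. (-1)^i * int (r' choose i) * x^(n-1-i))"
      unfolding binomial_absorb_comp sum_distrib_left using Suc by (intro sum.cong) (simp_all add: algebra_simps)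
    also have "(\<Sum>i=0..r. (-1)^i * int (r' choose i) * x^(n-1-i)) = (\<Sum>i=0..r'. (-1)^i * int (r' choose i) * x^(n-1-i))"
      using Suc by simp
    also have "\<dots> = x^(n-1-r') * (x-1)^r'" by (rule Bin) (use Suc assms in simp)
    finally show ?thesis using Suc by simp
  qed
  show ?thesis using split p1 p2 by simp
qed

lemma theta_alt: "theta l x = x^l + int l * x^(l-1)"
  by (cases l) (simp_all add: theta_def algebra_simps)

lemma sum_theta:
  fixes x :: int
  assumes "r \<le> n"
  shows "(\<Sum>i=0..r. (-1)^i * int (r choose i) * theta (n-i) x)
     = x^(n-r) * (x-1)^r + int (n-r) * (x^(n-r-1) * (x-1)^r) + int r * (x^(n-r) * (x-1)^(r-1))"
proof -
  have "(\<Sum>i=0..r. (-1)^i * int (r choose i) * theta (n-i) x)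
     = (\<Sum>i=0..r. (-1)^i * int (r choose i) * x^(n-i)) + (\<Sum>i=0..r. (-1)^i * int (r choose i) * (int (n-i) * x^(n-i-1)))"
    unfolding sum.distrib[symmetric] theta_alt by (rule sum.cong) (simp_all add: algebra_simps)
  then show ?thesis using Bin[OF assms] Der[OF assms] by simp
qed

lemma dim_s:
  assumes "s \<le> n" "a \<ge> 1" "s \<ge> 1 \<Longrightarrow> a \<ge> 2"
  shows "quot_dim_eq n (Iideal n s a :: 'k::field mpoly set)
    ((a-1)^(n-s)*(a-2)^s + (n-s)*((a-1)^(n-s-1)*(a-2)^s) + s*((a-1)^(n-s)*(a-2)^(s-1)))"
proof -
  have w: "\<forall>i\<in>{1..n}. omega n s a i \<ge> 1"
  proof
    fix i assume "i \<in> {1..n}"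
    show "omega n s a i \<ge> 1"
    proof (cases "i \<le> n - s")
      case False then have "s \<ge> 1" using \<open>i \<in> {1..n}\<close> by (cases s) auto
      then have "a \<ge> 2" using assms(3) by blast
      then show ?thesis using False by (simp add: omega_def)
    qed (use assms \<open>i \<in> {1..n}\<close> in \<open>simp add: omega_def\<close>)
  qed
  have fc: "finite (NS (omega n s a) n)" and cc: "card (NS (omega n s a) n) = (\<Prod>j\<in>{1..n}. omega n s a j - 1) + (\<Sum>i\<in>{1..n}. \<Prod>j\<in>{1..n}-{i}. omega n s a j - 1)"
    using NS_card[OF w] by auto
  have "quot_dim_eq n (ideal_gen n (mon ` GE (omega n s a) n) :: 'k mpoly set) (card (NS (omega n s a) n))"
  proof (rule dim_general[OF fc])
    fix e assume "e \<in> NS (omega n s a) n" then show "Poly_Mapping.keys e \<subseteq> {1..n}" unfolding NS_def by blast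
  next
    fix e :: "nat \<Rightarrow>\<^sub>0 nat" assume "Poly_Mapping.keys e \<subseteq> {1..n}"
    then show "e \<in> NS (omega n s a) n \<longleftrightarrow> \<not> (\<exists>g\<in>GE (omega n s a) n. \<exists>d. e = d + g)" by (rule NS_char)
  qed
  then show ?thesis unfolding Iideal_eq cc count_omega[OF assms(1)] .
qed

theorem lemma2:
  fixes n r a :: nat
  assumes "n \<ge> 1" and "r \<le> n" and "a \<ge> 1" and "r \<ge> 1 \<Longrightarrow> a \<ge> 2"
  shows "quot_dim_eq n (Iideal n 0 a :: 'k::field mpoly set) ((a - 1) ^ (n - 1) * (a + n - 1)) \<and>
         (\<exists>d. quot_dim_eq n (Iideal n r a :: 'k::field mpoly set) d \<and>
           int d = (\<Sum>i=0..r. (-1) ^ i * int (r choose i) * theta (n - i) (int a - 1)))"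
proof
  have "quot_dim_eq n (Iideal n 0 a :: 'k::field mpoly set) ((a-1)^(n-0)*(a-2)^0 + (n-0)*((a-1)^(n-0-1)*(a-2)^0) + 0*((a-1)^(n-0)*(a-2)^(0-1)))"
    by (rule dim_s) (use assms in auto)
  moreover have "(a-1)^(n-0)*(a-2)^0 + (n-0)*((a-1)^(n-0-1)*(a-2)^0) + 0*((a-1)^(n-0)*(a-2)^(0-1)) = (a - 1) ^ (n - 1) * (a + n - 1)"
  proof -
    obtain k where n: "n = Suc k" using assms(1) by (cases n) auto
    obtain b where a: "a = Suc b" using assms(3) by (cases a) auto
    show ?thesis unfolding n a by (simp add: algebra_simps)
  qed
  ultimately show "quot_dim_eq n (Iideal n 0 a :: 'k::field mpoly set) ((a - 1) ^ (n - 1) * (a + n - 1))" by simp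
next
  let ?d = "(a-1)^(n-r)*(a-2)^r + (n-r)*((a-1)^(n-r-1)*(a-2)^r) + r*((a-1)^(n-r)*(a-2)^(r-1))"
  have q: "quot_dim_eq n (Iideal n r a :: 'k::field mpoly set) ?d"
    by (rule dim_s) (use assms in auto)
  have "int ?d = (\<Sum>i=0..r. (-1) ^ i * int (r choose i) * theta (n - i) (int a - 1))"
  proof (cases "r = 0")
    case True
    have "int (a - 1) = int a - 1" using assms(3) by simp
    then show ?thesis unfolding sum_theta[OF assms(2)] using True by simp
  next
    case False
    have "int (a - 1) = int a - 1" "int (a - 2) = int a - 1 - 1" using assms(3,4) False by auto
    then show ?thesis unfolding sum_theta[OF assms(2)] by simp
  qed
  with q show "\<exists>d. quot_dim_eq n (Iideal n r a :: 'k::field mpoly set) d \<and>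
           int d = (\<Sum>i=0..r. (-1) ^ i * int (r choose i) * theta (n - i) (int a - 1))" by blast
qed

end
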